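(* Let $b\ge 2$ be an integer and let $w$ be a fixed block of $b$-ary digits of length $p\ge1$. For each integer $k\ge 0$ let $\mu_k$ be the discrete measure on $[0,1)$ $$\mu_k=\sum_{X:\,k_w(X)=k} b^{-|X|}\,\delta_{x(X)},$$ where the sum is over all finite strings $X$ of $b$-ary digits (the empty string included) with $k_w(X)=k$. Then, as $k\to\infty$, $\mu_k$ converges weakly to $b^p$ times Lebesgue measure on $[0,1)$. Precisely, for every interval $I\subset[0,1)$, $$\lim_{k\to\infty}\mu_k(I)=b^p\,|I|,$$ where $|I|=\sup I-\inf I$.
   Context: Strings are finite sequences over the alphabet $\{0,1,\dots,b-1\}$, including the empty string $\epsilon$. The length of a string $X$ is $|X|$. For a string $X$, $n(X)$ is the non-negative integer it represents in base $b$ (left-to-right positional notation), with $n(\epsilon)=0$, and $x(X)=n(X)/b^{|X|}\in[0,1)$. $k_w(X)$ is the number of occurrences of $w$ in $X$, counting possibly overlapping occurrences: indices $i$ with $x_i\dots x_{i+p-1}=w$. $\delta_y$ denotes the Dirac mass at $y$. *)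

theory Defs
  imports "HOL-Analysis.Analysis"
begin

definition is_string :: "nat \<Rightarrow> nat list \<Rightarrow> bool" where
  "is_string b X \<longleftrightarrow> (\<forall>d\<in>set X. d < b)"

definition str_val :: "nat \<Rightarrow> nat list \<Rightarrow> nat" where
  "str_val b X = foldl (\<lambda>acc d. acc * b + d) 0 X"

definition str_x :: "nat \<Rightarrow> nat list \<Rightarrow> real" where
  "str_x b X = real (str_val b X) / real b ^ length X"

definition occ :: "nat list \<Rightarrow> nat list \<Rightarrow> nat" where
  "occ w X = card {i. i + length w \<le> length X \<and> take (length w) (drop i X) = w}"

definition mu :: "nat \<Rightarrow> nat list \<Rightarrow> nat \<Rightarrow> real set \<Rightarrow> ennreal" where
  "mu b w k I = (\<Sum>\<^sub>\<infinity> X \<in> {X. is_string b X \<and> occ w X = k \<and> str_x b X \<in> I}.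
                    ennreal (1 / real b ^ length X))"

end

theory Submission
  imports Defs
begin


lemma ennreal_infsum_SUP:
  "infsum (f::'a \<Rightarrow> ennreal) A = (SUP F\<in>{F. finite F \<and> F \<subseteq> A}. sum f F)"
  by (rule nonneg_infsum_complete) auto

lemma ennreal_infsum_mono_set:
  assumes "A \<subseteq> B" shows "infsum (f::'a \<Rightarrow> ennreal) A \<le> infsum f B"
  unfolding ennreal_infsum_SUP using assms by (intro SUP_subset_mono) auto

lemma ennreal_sum_le_infsum:
  assumes "finite F" "F \<subseteq> A" shows "sum (f::'a \<Rightarrow> ennreal) F \<le> infsum f A"
  unfolding ennreal_infsum_SUP using assms by (intro SUP_upper) auto

lemma ennreal_infsum_cmult:
  "infsum (\<lambda>x. c * (f::'a \<Rightarrow> ennreal) x) A = c * infsum f A"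
  unfolding ennreal_infsum_SUP SUP_mult_left_ennreal sum_distrib_left by simp

lemma ennreal_infsum_cmult':
  "infsum (\<lambda>x. (f::'a \<Rightarrow> ennreal) x * c) A = infsum f A * c"
  using ennreal_infsum_cmult[of c f A] by (simp add: mult.commute)

lemma ennreal_infsum_finite_Sigma:
  fixes f :: "'a \<times> 'b \<Rightarrow> ennreal"
  assumes "finite A"
  shows "infsum f (Sigma A B) = (\<Sum>x\<in>A. infsum (\<lambda>y. f (x, y)) (B x))"
  using assms
proof (induction A rule: finite_induct)
  case empty
  then show ?case by simp
next
  case (insert a A)
  have eq: "Sigma (insert a A) B = (Pair a ` B a) \<union> Sigma A B" by auto
  have "infsum f (Sigma (insert a A) B) = infsum f (Pair a ` B a) + infsum f (Sigma A B)"
    unfolding eq using insert.hyps by (intro infsum_Un_disjoint) (auto intro: nonneg_summable_on_complete)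
  also have "infsum f (Pair a ` B a) = infsum (\<lambda>y. f (a, y)) (B a)"
    by (subst infsum_reindex) (auto simp: inj_on_def o_def)
  finally show ?case using insert by simp
qed

lemma ennreal_infsum_Sigma:
  fixes f :: "'a \<times> 'b \<Rightarrow> ennreal"
  shows "infsum f (Sigma A B) = infsum (\<lambda>x. infsum (\<lambda>y. f (x, y)) (B x)) A"
proof (rule antisym)
  show "infsum f (Sigma A B) \<le> infsum (\<lambda>x. infsum (\<lambda>y. f (x, y)) (B x)) A"
    unfolding ennreal_infsum_SUP[of f]
  proof (rule SUP_least)
    fix F assume F: "F \<in> {F. finite F \<and> F \<subseteq> Sigma A B}"
    have "sum f F \<le> infsum f (Sigma (fst ` F) B)"
      using F by (intro ennreal_sum_le_infsum) force+
    also have "\<dots> = (\<Sum>x\<in>fst ` F. infsum (\<lambda>y. f (x, y)) (B x))"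
      using F by (intro ennreal_infsum_finite_Sigma) auto
    also have "\<dots> \<le> infsum (\<lambda>x. infsum (\<lambda>y. f (x, y)) (B x)) A"
      using F by (intro ennreal_sum_le_infsum) auto
    finally show "sum f F \<le> \<dots>" .
  qed
next
  show "infsum (\<lambda>x. infsum (\<lambda>y. f (x, y)) (B x)) A \<le> infsum f (Sigma A B)"
    unfolding ennreal_infsum_SUP[of "\<lambda>x. infsum (\<lambda>y. f (x, y)) (B x)"]
  proof (rule SUP_least)
    fix F assume F: "F \<in> {F. finite F \<and> F \<subseteq> A}"
    have "(\<Sum>x\<in>F. infsum (\<lambda>y. f (x, y)) (B x)) = infsum f (Sigma F B)"
      using F by (intro ennreal_infsum_finite_Sigma[symmetric]) auto
    also have "\<dots> \<le> infsum f (Sigma A B)"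
      using F by (intro ennreal_infsum_mono_set) auto
    finally show "(\<Sum>x\<in>F. infsum (\<lambda>y. f (x, y)) (B x)) \<le> infsum f (Sigma A B)" .
  qed
qed

lemma ennreal_infsum_product:
  fixes f g :: "_ \<Rightarrow> ennreal"
  shows "infsum (\<lambda>(x,y). f x * g y) (A \<times> B) = infsum f A * infsum g B"
  by (simp add: ennreal_infsum_Sigma ennreal_infsum_cmult ennreal_infsum_cmult')



definition endsw :: "nat list \<Rightarrow> nat list \<Rightarrow> bool" where
  "endsw w X \<longleftrightarrow> length w \<le> length X \<and> drop (length X - length w) X = w"

lemma endsw_append_long:
  assumes "length w \<le> length V" shows "endsw w (U @ V) \<longleftrightarrow> endsw w V"
  using assms by (auto simp: endsw_def drop_append)

lemma endsw_split: "endsw w X \<Longrightarrow> X = take (length X - length w) X @ w"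
  unfolding endsw_def by (metis append_take_drop_id)

lemma endsw_app_w: "endsw w (U @ w)"
  by (simp add: endsw_def)

lemma occ_Nil: "w \<noteq> [] \<Longrightarrow> occ w [] = 0"
  by (simp add: occ_def)

lemma occ_snoc:
  assumes "w \<noteq> []"
  shows "occ w (X @ [d]) = occ w X + (if endsw w (X @ [d]) then 1 else 0)"
proof -
  define p n where "p = length w" and "n = length X"
  have eq: "{i. i + p \<le> length (X @ [d]) \<and> take p (drop i (X @ [d])) = w} =
        {i. i + p \<le> n \<and> take p (drop i X) = w} \<union> (if endsw w (X @ [d]) then {n + 1 - p} else {})"
  proof (intro set_eqI iffI)
    fix i assume "i \<in> {i. i + p \<le> length (X @ [d]) \<and> take p (drop i (X @ [d])) = w}"
    then have i: "i + p \<le> n + 1" "take p (drop i (X @ [d])) = w" by (auto simp: n_def)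
    show "i \<in> {i. i + p \<le> n \<and> take p (drop i X) = w} \<union> (if endsw w (X @ [d]) then {n + 1 - p} else {})"
    proof (cases "i + p \<le> n")
      case True
      then show ?thesis using i by (auto simp: n_def take_append)
    next
      case False
      then have "i + p = n + 1" using i by simp
      then have "drop i (X @ [d]) = w" using i by (auto simp: n_def p_def)
      moreover have "i = n + 1 - p" using \<open>i + p = n + 1\<close> by simp
      ultimately show ?thesis using \<open>i + p = n + 1\<close> by (auto simp: endsw_def n_def p_def)
    qed
  next
    fix i assume "i \<in> {i. i + p \<le> n \<and> take p (drop i X) = w} \<union> (if endsw w (X @ [d]) then {n + 1 - p} else {})"
    then show "i \<in> {i. i + p \<le> length (X @ [d]) \<and> take p (drop i (X @ [d])) = w}"
      by (auto simp: n_def p_def take_append endsw_def split: if_splits)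
  qed
  have fin: "finite {i. i + p \<le> n \<and> take p (drop i X) = w}" by (rule finite_subset[of _ "{..n}"]) auto
  have disj: "{i. i + p \<le> n \<and> take p (drop i X) = w} \<inter> (if endsw w (X @ [d]) then {n + 1 - p} else {}) = {}"
    using assms by (auto simp: p_def)
  show ?thesis
    unfolding occ_def p_def[symmetric] eq
    by (subst card_Un_disjoint[OF fin _ disj]) (auto simp: n_def)
qed

lemma occ_append:
  assumes "w \<noteq> []"
  shows "occ w (X @ Y) = occ w X + card {j\<in>{1..length Y}. endsw w (X @ take j Y)}"
proof (induction Y rule: rev_induct)
  case Nil
  then show ?case by simp
next
  case (snoc d Y)
  have eq: "{j\<in>{1..length (Y @ [d])}. endsw w (X @ take j (Y @ [d]))} =
     {j\<in>{1..length Y}. endsw w (X @ take j Y)} \<union> (if endsw w (X @ Y @ [d]) then {length Y + 1} else {})"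
    by (auto simp: take_append le_Suc_eq split: if_splits)
  have "occ w (X @ Y @ [d]) = occ w (X @ Y) + (if endsw w (X @ Y @ [d]) then 1 else 0)"
    using occ_snoc[OF assms, of "X @ Y" d] by simp
  then show ?case unfolding eq using snoc
    by (subst card_Un_disjoint) auto
qed

lemma occ_self: "w \<noteq> [] \<Longrightarrow> occ w w = 1"
proof -
  have "{i. i + length w \<le> length w \<and> take (length w) (drop i w) = w} = {0}" by auto
  then show ?thesis by (simp add: occ_def)
qed

lemma occ_le_length: assumes "w \<noteq> []" shows "occ w X \<le> length X"
proof -
  have "{i. i + length w \<le> length X \<and> take (length w) (drop i X) = w} \<subseteq> {..<length X}"
  proof
    fix x assume "x \<in> {i. i + length w \<le> length X \<and> take (length w) (drop i X) = w}"
    then show "x \<in> {..<length X}" using assms by (cases w) auto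
  qed
  then show ?thesis unfolding occ_def by (metis card_lessThan card_mono finite_lessThan)
qed

lemma occ_mono: "w \<noteq> [] \<Longrightarrow> occ w X \<le> occ w (X @ Y)"
  using occ_append[of w X Y] by simp

lemma occ_super:
  assumes "w \<noteq> []" shows "occ w X + occ w Y \<le> occ w (X @ Y)"
proof -
  have "occ w Y = card {j\<in>{1..length Y}. endsw w (take j Y)}"
    using occ_append[OF assms, of "[]" Y] by (simp add: occ_Nil[OF assms])
  also have "\<dots> \<le> card {j\<in>{1..length Y}. endsw w (X @ take j Y)}"
  proof (rule card_mono)
    show "{j \<in> {1..length Y}. endsw w (take j Y)} \<subseteq> {j \<in> {1..length Y}. endsw w (X @ take j Y)}"
      using endsw_append_long by (auto simp: endsw_def)
  qed auto
  finally show ?thesis using occ_append[OF assms, of X Y] by simp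
qed

lemma occ_after:
  assumes "w \<noteq> []" "endsw w t"
  shows "occ w (t @ Y) + 1 = occ w t + occ w (w @ Y)"
proof -
  obtain t' where t': "t = t' @ w" using endsw_split[OF assms(2)] by blast
  have "{j\<in>{1..length Y}. endsw w (t @ take j Y)} = {j\<in>{1..length Y}. endsw w (w @ take j Y)}"
    unfolding t' using endsw_append_long[of w "w @ take _ Y" t'] by auto
  then show ?thesis using occ_append[OF assms(1), of t Y] occ_append[OF assms(1), of w Y]
    occ_self[OF assms(1)] by simp
qed

lemma occ_two:
  assumes "w \<noteq> []" "Z \<noteq> []" "endsw w (w @ Z)"
  shows "2 \<le> occ w (w @ Z)"
proof -
  obtain Z' d where Z: "Z = Z' @ [d]" using assms(2) rev_exhaust by blast
  have "occ w (w @ Z) = occ w (w @ Z') + 1"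
    using occ_snoc[OF assms(1), of "w @ Z'" d] assms(3) Z by simp
  moreover have "occ w w \<le> occ w (w @ Z')" by (rule occ_mono[OF assms(1)])
  ultimately show ?thesis using occ_self[OF assms(1)] by simp
qed

lemma first_passage:
  assumes "w \<noteq> []" "occ w s < k" "k \<le> occ w (s @ Y)"
  shows "\<exists>j\<le>length Y. occ w (s @ take j Y) = k \<and> endsw w (s @ take j Y)"
proof -
  define P where "P j \<longleftrightarrow> k \<le> occ w (s @ take j Y)" for j
  have "P (length Y)" using assms by (simp add: P_def)
  define j where "j = (LEAST j. P j)"
  have Pj: "P j" unfolding j_def by (rule LeastI) fact
  have jle: "j \<le> length Y" unfolding j_def by (rule Least_le) fact
  have j0: "j \<noteq> 0" using Pj assms(2) by (intro notI) (simp add: P_def)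
  define i where "i = j - 1"
  have ij: "j = Suc i" using j0 by (simp add: i_def)
  have notPi: "\<not> P i" using ij j_def not_less_Least by (metis lessI)
  have il: "i < length Y" using ij jle by simp
  have tj: "take j Y = take i Y @ [Y ! i]" using ij il by (simp add: take_Suc_conv_app_nth)
  have "occ w (s @ take j Y) = occ w (s @ take i Y) + (if endsw w (s @ take j Y) then 1 else 0)"
    using occ_snoc[OF assms(1), of "s @ take i Y" "Y ! i"] tj by simp
  then have "occ w (s @ take j Y) = k \<and> endsw w (s @ take j Y)"
    using Pj notPi by (auto simp: P_def split: if_splits)
  then show ?thesis using jle by blast
qed

lemma prefix_free:
  assumes "w \<noteq> []" "endsw w (s @ Y1)" "endsw w (s @ Y1 @ Z)"
    "occ w (s @ Y1 @ Z) = occ w (s @ Y1)"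
  shows "Z = []"
proof (rule ccontr)
  assume Z: "Z \<noteq> []"
  obtain t' where t': "s @ Y1 = t' @ w" using endsw_split[OF assms(2)] by blast
  have "s @ Y1 @ Z = t' @ (w @ Z)" using t' by (metis append.assoc)
  then have e: "endsw w (w @ Z)" using assms(3) endsw_append_long[of w "w @ Z" t']
    unfolding \<open>s @ Y1 @ Z = t' @ (w @ Z)\<close> by simp
  have "occ w (s @ Y1 @ Z) + 1 = occ w (s @ Y1) + occ w (w @ Z)"
    using occ_after[OF assms(1,2), of Z] by simp
  then show False using occ_two[OF assms(1) Z e] assms(4) by simp
qed



definition Sn :: "nat \<Rightarrow> nat \<Rightarrow> nat list set" where
  "Sn b n = {X. set X \<subseteq> {..<b} \<and> length X = n}"

lemma finite_Sn[simp]: "finite (Sn b n)"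
  unfolding Sn_def by (rule finite_lists_length_eq) simp

lemma card_Sn[simp]: "card (Sn b n) = b ^ n"
  unfolding Sn_def using card_lists_length_eq[of "{..<b}" n] by simp

lemma is_string_iff: "is_string b X \<longleftrightarrow> set X \<subseteq> {..<b}"
  by (auto simp: is_string_def)

lemma card_image_prod_le:
  assumes "finite P" "finite Q"
  shows "card (f ` (P \<times> Q)) \<le> card P * card Q"
  by (metis card_cartesian_product card_image_le finite_cartesian_product assms)

lemma decseq_to_0:
  fixes r :: "nat \<Rightarrow> real"
  assumes "decseq r" "\<And>n. 0 \<le> r n" "\<And>e. e > 0 \<Longrightarrow> \<exists>N. r N < e"
  shows "r \<longlonglongrightarrow> 0"
proof (rule LIMSEQ_I)
  fix e :: real assume "e > 0"
  then obtain N where "r N < e" using assms(3) by blast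
  then have "\<forall>n\<ge>N. norm (r n - 0) < e"
    using assms(1,2) by (auto simp: decseq_def) (metis order.strict_trans1)
  then show "\<exists>N. \<forall>n\<ge>N. norm (r n - 0) < e" by blast
qed

locale wsetup =
  fixes b :: nat and w :: "nat list"
  assumes b2: "2 \<le> b" and wne: "w \<noteq> []" and ws: "set w \<subseteq> {..<b}"
begin

definition bad :: "nat \<Rightarrow> nat \<Rightarrow> nat" where
  "bad j N = card {Y\<in>Sn b N. occ w Y < j}"

definition rr :: "nat \<Rightarrow> nat \<Rightarrow> real" where
  "rr j N = real (bad j N) / real b ^ N"

lemma bpos: "real b > 0" using b2 by simp

lemma bad_le: "bad j N \<le> b ^ N"
  unfolding bad_def by (metis (no_types, lifting) card_Sn card_mono finite_Sn mem_Collect_eq subsetI)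

lemma rr_nonneg: "0 \<le> rr j N" by (simp add: rr_def)

lemma rr_le1: "rr j N \<le> 1"
  using bad_le[of j N] bpos by (simp add: rr_def divide_le_eq_1)

lemma bad_Suc: "bad j (Suc N) \<le> bad j N * b"
proof -
  have "{Y\<in>Sn b (Suc N). occ w Y < j} \<subseteq> (\<lambda>(A,d). A @ [d]) ` ({A\<in>Sn b N. occ w A < j} \<times> {..<b})"
  proof
    fix Y assume Y: "Y \<in> {Y\<in>Sn b (Suc N). occ w Y < j}"
    then have Yne: "Y \<noteq> []" by (auto simp: Sn_def)
    then have eq: "Y = butlast Y @ [last Y]" by simp
    have "occ w (butlast Y) \<le> occ w Y" using occ_mono[OF wne, of "butlast Y" "[last Y]"] eq by simp
    moreover have "last Y < b" using last_in_set[OF Yne] Y by (simp add: Sn_def subset_iff)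
    moreover have "set (butlast Y) \<subseteq> {..<b}" using Y by (auto simp: Sn_def dest: in_set_butlastD)
    ultimately show "Y \<in> (\<lambda>(A,d). A @ [d]) ` ({A\<in>Sn b N. occ w A < j} \<times> {..<b})"
      using Y by (auto simp: Sn_def intro!: image_eqI[of _ _ "(butlast Y, last Y)"] eq)
  qed
  then have "bad j (Suc N) \<le> card ((\<lambda>(A,d). A @ [d]) ` ({A\<in>Sn b N. occ w A < j} \<times> {..<b}))"
    unfolding bad_def by (intro card_mono) auto
  also have "\<dots> \<le> bad j N * b" unfolding bad_def
    using card_image_prod_le[of "{A\<in>Sn b N. occ w A < j}" "{..<b}" "\<lambda>(A,d). A @ [d]"] by simp
  finally show ?thesis .
qed

lemma rr_decseq: "decseq (rr j)"
proof (rule decseq_SucI)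
  fix N
  have "real (bad j (Suc N)) \<le> real (bad j N) * real b" using bad_Suc[of j N] by (metis of_nat_le_iff of_nat_mult)
  then show "rr j (Suc N) \<le> rr j N" using bpos
    by (simp add: rr_def divide_simps)
qed


lemma w_Sn: "w \<in> Sn b (length w)" using ws by (simp add: Sn_def)

lemma bad1_step: "bad 1 (N + length w) \<le> bad 1 N * (b ^ length w - 1)"
proof -
  let ?p = "length w"
  have "{Y\<in>Sn b (N + ?p). occ w Y < 1} \<subseteq> (\<lambda>(A,B). A @ B) ` ({A\<in>Sn b N. occ w A < 1} \<times> (Sn b ?p - {w}))"
  proof
    fix Y assume Y: "Y \<in> {Y\<in>Sn b (N + ?p). occ w Y < 1}"
    have eq: "Y = take N Y @ drop N Y" by simp
    have "occ w (take N Y) \<le> occ w Y" using occ_mono[OF wne, of "take N Y" "drop N Y"] by simp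
    moreover have "drop N Y \<noteq> w"
    proof
      assume "drop N Y = w"
      then have "occ w (take N Y) + occ w w \<le> occ w Y" using occ_super[OF wne, of "take N Y" w] eq by simp
      then show False using Y occ_self[OF wne] by simp
    qed
    ultimately show "Y \<in> (\<lambda>(A,B). A @ B) ` ({A\<in>Sn b N. occ w A < 1} \<times> (Sn b ?p - {w}))"
      using Y by (auto simp: Sn_def intro!: image_eqI[of _ _ "(take N Y, drop N Y)"] dest: in_set_takeD in_set_dropD)
  qed
  then have "bad 1 (N + ?p) \<le> card ((\<lambda>(A,B). A @ B) ` ({A\<in>Sn b N. occ w A < 1} \<times> (Sn b ?p - {w})))"
    unfolding bad_def by (intro card_mono) auto
  also have "\<dots> \<le> bad 1 N * card (Sn b ?p - {w})" unfolding bad_def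
    using card_image_prod_le[of "{A\<in>Sn b N. occ w A < 1}" "Sn b ?p - {w}" "\<lambda>(A,B). A @ B"] by simp
  also have "card (Sn b ?p - {w}) = b ^ ?p - 1" using w_Sn by simp
  finally show ?thesis .
qed

lemma rr1_step: "rr 1 (N + length w) \<le> rr 1 N * (1 - 1 / real b ^ length w)"
proof -
  have bp: "real b ^ length w \<ge> 1" using b2 by simp
  have "real (bad 1 (N + length w)) \<le> real (bad 1 N) * (real b ^ length w - 1)"
  proof -
    have "b ^ length w \<ge> 1" using b2 by simp
    then have "real (b ^ length w - 1) = real b ^ length w - 1" by (simp add: of_nat_diff)
    moreover have "real (bad 1 (N + length w)) \<le> real (bad 1 N * (b ^ length w - 1))"
      using bad1_step[of N] by (rule of_nat_mono)
    ultimately show ?thesis by simp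
  qed
  then show ?thesis using bpos
    by (simp add: rr_def power_add divide_simps)
qed

lemma rr1_mult: "rr 1 (m * length w) \<le> (1 - 1 / real b ^ length w) ^ m"
proof (induction m)
  case 0
  then show ?case using rr_le1 by simp
next
  case (Suc m)
  have q: "0 \<le> 1 - 1 / real b ^ length w" using b2 by (simp add: divide_simps)
  have "rr 1 (Suc m * length w) = rr 1 (m * length w + length w)" by (simp add: add.commute)
  also have "\<dots> \<le> rr 1 (m * length w) * (1 - 1 / real b ^ length w)" by (rule rr1_step)
  also have "\<dots> \<le> (1 - 1 / real b ^ length w) ^ m * (1 - 1 / real b ^ length w)"
    by (rule mult_right_mono[OF Suc q])
  finally show ?case by (simp add: mult.commute)
qed

lemma rr1_lim: "rr 1 \<longlonglongrightarrow> 0"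
proof (rule decseq_to_0[OF rr_decseq rr_nonneg])
  fix e :: real assume e: "e > 0"
  have q0: "0 \<le> 1 - 1 / real b ^ length w" using b2 by (simp add: divide_simps)
  have q1: "1 - 1 / real b ^ length w < 1" using bpos by simp
  have "(\<lambda>m. (1 - 1 / real b ^ length w) ^ m) \<longlonglongrightarrow> 0"
    by (rule LIMSEQ_power_zero) (use q0 q1 in simp)
  then have "eventually (\<lambda>m. (1 - 1 / real b ^ length w) ^ m < e) sequentially"
    using e by (rule order_tendstoD(2))
  then obtain m where "(1 - 1 / real b ^ length w) ^ m < e"
    unfolding eventually_sequentially by blast
  then show "\<exists>N. rr 1 N < e" using rr1_mult[of m] by (intro exI[of _ "m * length w"]) simp
qed

lemma bad_double: "bad (Suc j) (N + N) \<le> bad 1 N * b ^ N + b ^ N * bad j N"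
proof -
  let ?U1 = "{A\<in>Sn b N. occ w A < 1} \<times> Sn b N" and ?U2 = "Sn b N \<times> {B\<in>Sn b N. occ w B < j}"
  have "{Y\<in>Sn b (N + N). occ w Y < Suc j} \<subseteq> (\<lambda>(A,B). A @ B) ` ?U1 \<union> (\<lambda>(A,B). A @ B) ` ?U2"
  proof
    fix Y assume Y: "Y \<in> {Y\<in>Sn b (N + N). occ w Y < Suc j}"
    have eq: "Y = take N Y @ drop N Y" by simp
    have "occ w (take N Y) + occ w (drop N Y) \<le> occ w Y"
      using occ_super[OF wne, of "take N Y" "drop N Y"] by simp
    then have "occ w (take N Y) < 1 \<or> occ w (drop N Y) < j" using Y by auto
    moreover have "take N Y \<in> Sn b N" "drop N Y \<in> Sn b N" using Y
      by (auto simp: Sn_def dest: in_set_takeD in_set_dropD)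
    ultimately show "Y \<in> (\<lambda>(A,B). A @ B) ` ?U1 \<union> (\<lambda>(A,B). A @ B) ` ?U2"
      by (auto intro!: image_eqI[of _ _ "(take N Y, drop N Y)"])
  qed
  then have "bad (Suc j) (N + N) \<le> card ((\<lambda>(A,B). A @ B) ` ?U1 \<union> (\<lambda>(A,B). A @ B) ` ?U2)"
    unfolding bad_def by (intro card_mono) auto
  also have "\<dots> \<le> card ((\<lambda>(A,B). A @ B) ` ?U1) + card ((\<lambda>(A,B). A @ B) ` ?U2)"
    by (rule card_Un_le)
  also have "card ((\<lambda>(A,B). A @ B) ` ?U1) \<le> bad 1 N * b ^ N" unfolding bad_def
    using card_image_prod_le[of "{A\<in>Sn b N. occ w A < 1}" "Sn b N" "\<lambda>(A,B). A @ B"] by simp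
  also have "card ((\<lambda>(A,B). A @ B) ` ?U2) \<le> b ^ N * bad j N" unfolding bad_def
    using card_image_prod_le[of "Sn b N" "{A\<in>Sn b N. occ w A < j}" "\<lambda>(A,B). A @ B"] by simp
  finally show ?thesis by simp
qed

lemma rr_double: "rr (Suc j) (N + N) \<le> rr 1 N + rr j N"
proof -
  have "real (bad (Suc j) (N + N)) \<le> real (bad 1 N) * real b ^ N + real b ^ N * real (bad j N)"
    using bad_double[of j N] by (metis of_nat_add of_nat_le_iff of_nat_mult of_nat_power)
  then show ?thesis using bpos
    by (simp add: rr_def power_add divide_simps) (simp add: algebra_simps)
qed

lemma rr_lim: "rr j \<longlonglongrightarrow> 0"
proof (induction j)
  case 0
  then show ?case by (simp add: rr_def bad_def)
next
  case (Suc j)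
  show ?case
  proof (rule decseq_to_0[OF rr_decseq rr_nonneg])
    fix e :: real assume e: "e > 0"
    have "eventually (\<lambda>N. rr 1 N < e / 2) sequentially"
      using rr1_lim e by (metis order_tendstoD(2) half_gt_zero)
    moreover have "eventually (\<lambda>N. rr j N < e / 2) sequentially"
      using Suc e by (metis order_tendstoD(2) half_gt_zero)
    ultimately obtain N where "rr 1 N < e / 2" "rr j N < e / 2"
      by (metis (mono_tags, lifting) eventually_conj eventually_sequentially order.refl)
    then show "\<exists>N. rr (Suc j) N < e" using rr_double[of j N] by (intro exI[of _ "N + N"]) simp
  qed
qed

end


context wsetup begin

definition FP :: "nat list \<Rightarrow> nat \<Rightarrow> nat list set" where
  "FP s k = {Y. set Y \<subseteq> {..<b} \<and> occ w (s @ Y) = k \<and> endsw w (s @ Y)}"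

definition H :: "nat list set" where
  "H = {Y. set Y \<subseteq> {..<b} \<and> occ w (w @ Y) = 1}"

definition R :: "nat list \<Rightarrow> nat \<Rightarrow> nat list set" where
  "R s k = {Y. set Y \<subseteq> {..<b} \<and> occ w (s @ Y) = k}"

lemma fp_unique:
  assumes "Y1 \<in> FP s k" "Y1' \<in> FP s k" "Y1 @ Z = Y1' @ Z'"
  shows "Y1 = Y1'"
proof -
  obtain us where "(Y1 = Y1' @ us \<and> us @ Z = Z') \<or> (Y1 @ us = Y1' \<and> Z = us @ Z')"
    using assms(3) append_eq_append_conv2 by metis
  then show ?thesis
  proof
    assume h: "Y1 = Y1' @ us \<and> us @ Z = Z'"
    have "us = []" using prefix_free[OF wne, of s Y1' us] assms(1,2) h by (auto simp: FP_def)
    then show ?thesis using h by simp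
  next
    assume h: "Y1 @ us = Y1' \<and> Z = us @ Z'"
    have "us = []" using prefix_free[OF wne, of s Y1 us] assms(1,2) h by (auto simp: FP_def)
    then show ?thesis using h by simp
  qed
qed

lemma R_bij:
  assumes "occ w s < k"
  shows "bij_betw (\<lambda>(Y1,Y2). Y1 @ Y2) (FP s k \<times> H) (R s k)"
proof (rule bij_betw_imageI)
  show "inj_on (\<lambda>(Y1,Y2). Y1 @ Y2) (FP s k \<times> H)"
  proof (rule inj_onI, clarsimp)
    fix Y1 Y2 Y1' Y2' assume h: "Y1 \<in> FP s k" "Y2 \<in> H" "Y1' \<in> FP s k" "Y2' \<in> H" "Y1 @ Y2 = Y1' @ Y2'"
    have "Y1 = Y1'" by (rule fp_unique[OF h(1) h(3) h(5)])
    then show "Y1 = Y1' \<and> Y2 = Y2'" using h(5) by simp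
  qed
next
  show "(\<lambda>(Y1,Y2). Y1 @ Y2) ` (FP s k \<times> H) = R s k"
  proof (intro set_eqI iffI)
    fix Y assume "Y \<in> (\<lambda>(Y1,Y2). Y1 @ Y2) ` (FP s k \<times> H)"
    then obtain Y1 Y2 where Y: "Y = Y1 @ Y2" "Y1 \<in> FP s k" "Y2 \<in> H" by auto
    have "occ w ((s @ Y1) @ Y2) + 1 = occ w (s @ Y1) + occ w (w @ Y2)"
      using Y by (intro occ_after[OF wne]) (auto simp: FP_def)
    then show "Y \<in> R s k" using Y by (auto simp: FP_def H_def R_def)
  next
    fix Y assume Y: "Y \<in> R s k"
    then obtain j where j: "j \<le> length Y" "occ w (s @ take j Y) = k" "endsw w (s @ take j Y)"
      using first_passage[OF wne assms, of Y] by (auto simp: R_def)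
    have "occ w ((s @ take j Y) @ drop j Y) + 1 = occ w (s @ take j Y) + occ w (w @ drop j Y)"
      using j by (intro occ_after[OF wne])
    then have "occ w (w @ drop j Y) = 1" using Y j by (simp add: R_def)
    then show "Y \<in> (\<lambda>(Y1,Y2). Y1 @ Y2) ` (FP s k \<times> H)" using Y j
      by (auto simp: FP_def H_def R_def intro!: image_eqI[of _ _ "(take j Y, drop j Y)"]
               dest: in_set_takeD in_set_dropD)
  qed
qed

lemma finite_bounded_strings: "finite {Y. set Y \<subseteq> {..<b} \<and> length Y \<le> N}"
  by (rule finite_lists_length_le) simp

lemma FP_card:
  assumes "occ w s < k"
  shows "card {Y\<in>Sn b N. k \<le> occ w (s @ Y)} = (\<Sum>Y1\<in>{Y1\<in>FP s k. length Y1 \<le> N}. b ^ (N - length Y1))"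
proof -
  let ?F = "{Y1\<in>FP s k. length Y1 \<le> N}"
  have finF: "finite ?F"
    by (rule finite_subset[OF _ finite_bounded_strings[of N]]) (auto simp: FP_def)
  have eq: "{Y\<in>Sn b N. k \<le> occ w (s @ Y)} = (\<Union>Y1\<in>?F. (\<lambda>Z. Y1 @ Z) ` Sn b (N - length Y1))"
  proof (intro set_eqI iffI)
    fix Y assume Y: "Y \<in> {Y\<in>Sn b N. k \<le> occ w (s @ Y)}"
    then obtain j where j: "j \<le> length Y" "occ w (s @ take j Y) = k" "endsw w (s @ take j Y)"
      using first_passage[OF wne assms, of Y] by auto
    have "take j Y \<in> ?F" using Y j by (auto simp: FP_def Sn_def dest: in_set_takeD)
    moreover have "drop j Y \<in> Sn b (N - length (take j Y))" using Y j
      by (auto simp: Sn_def dest: in_set_dropD)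
    ultimately show "Y \<in> (\<Union>Y1\<in>?F. (\<lambda>Z. Y1 @ Z) ` Sn b (N - length Y1))"
      by (auto intro!: bexI[of _ "take j Y"] image_eqI[of _ _ "drop j Y"])
  next
    fix Y assume "Y \<in> (\<Union>Y1\<in>?F. (\<lambda>Z. Y1 @ Z) ` Sn b (N - length Y1))"
    then obtain Y1 Z where Y: "Y = Y1 @ Z" "Y1 \<in> ?F" "Z \<in> Sn b (N - length Y1)" by auto
    have "occ w (s @ Y1) \<le> occ w ((s @ Y1) @ Z)" by (rule occ_mono[OF wne])
    then show "Y \<in> {Y\<in>Sn b N. k \<le> occ w (s @ Y)}" using Y by (auto simp: FP_def Sn_def)
  qed
  have "card (\<Union>Y1\<in>?F. (\<lambda>Z. Y1 @ Z) ` Sn b (N - length Y1)) =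
        (\<Sum>Y1\<in>?F. card ((\<lambda>Z. Y1 @ Z) ` Sn b (N - length Y1)))"
  proof (rule card_UN_disjoint[OF finF])
    show "\<forall>i\<in>?F. finite ((\<lambda>Z. i @ Z) ` Sn b (N - length i))" by simp
    show "\<forall>i\<in>?F. \<forall>j\<in>?F. i \<noteq> j \<longrightarrow> (\<lambda>Z. i @ Z) ` Sn b (N - length i) \<inter> (\<lambda>Z. j @ Z) ` Sn b (N - length j) = {}"
      using fp_unique by blast
  qed
  also have "\<dots> = (\<Sum>Y1\<in>?F. b ^ (N - length Y1))"
    by (intro sum.cong refl) (simp add: card_image inj_on_def)
  finally show ?thesis using eq by simp
qed

lemma H_card:
  "card {Z\<in>Sn b (N + length w). 1 \<le> occ w Z} = (\<Sum>Y2\<in>{Y2\<in>H. length Y2 \<le> N}. b ^ (N - length Y2))"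
proof -
  let ?F = "{Y2\<in>H. length Y2 \<le> N}"
  let ?p = "length w"
  have finF: "finite ?F"
    by (rule finite_subset[OF _ finite_bounded_strings[of N]]) (auto simp: H_def)
  have eq: "{Z\<in>Sn b (N + ?p). 1 \<le> occ w Z} = (\<Union>Y2\<in>?F. (\<lambda>A. A @ w @ Y2) ` Sn b (N - length Y2))"
  proof (intro set_eqI iffI)
    fix Z assume Z: "Z \<in> {Z\<in>Sn b (N + ?p). 1 \<le> occ w Z}"
    have "occ w [] < occ w Z" using Z occ_Nil[OF wne] by simp
    then obtain j where j: "j \<le> length Z" "occ w (take j Z) = occ w Z" "endsw w (take j Z)"
      using first_passage[OF wne, of "[]" "occ w Z" Z] by auto
    define A where "A = take (j - ?p) (take j Z)"
    have jp: "?p \<le> j" using j(1,3) by (auto simp: endsw_def)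
    have tj: "take j Z = A @ w" unfolding A_def using endsw_split[OF j(3)] j(1) by simp
    have "occ w (take j Z @ drop j Z) + 1 = occ w (take j Z) + occ w (w @ drop j Z)"
      using j by (intro occ_after[OF wne])
    then have H: "occ w (w @ drop j Z) = 1" using j by simp
    have "drop j Z \<in> ?F" using Z H jp by (auto simp: H_def Sn_def dest: in_set_dropD)
    moreover have "A \<in> Sn b (N - length (drop j Z))" using Z jp j(1)
      by (auto simp: Sn_def A_def dest: in_set_takeD)
    moreover have "Z = A @ w @ drop j Z" using tj by (metis append.assoc append_take_drop_id)
    ultimately show "Z \<in> (\<Union>Y2\<in>?F. (\<lambda>A. A @ w @ Y2) ` Sn b (N - length Y2))"
      by (auto intro!: bexI[of _ "drop j Z"] image_eqI[of _ _ A])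
  next
    fix Z assume "Z \<in> (\<Union>Y2\<in>?F. (\<lambda>A. A @ w @ Y2) ` Sn b (N - length Y2))"
    then obtain Y2 A where Z: "Z = A @ w @ Y2" "Y2 \<in> ?F" "A \<in> Sn b (N - length Y2)" by auto
    have "occ w A + occ w (w @ Y2) \<le> occ w Z" unfolding Z(1) by (rule occ_super[OF wne])
    then show "Z \<in> {Z\<in>Sn b (N + ?p). 1 \<le> occ w Z}" using Z ws by (auto simp: H_def Sn_def)
  qed
  have "card (\<Union>Y2\<in>?F. (\<lambda>A. A @ w @ Y2) ` Sn b (N - length Y2)) =
        (\<Sum>Y2\<in>?F. card ((\<lambda>A. A @ w @ Y2) ` Sn b (N - length Y2)))"
  proof (rule card_UN_disjoint[OF finF])
    show "\<forall>i\<in>?F. finite ((\<lambda>A. A @ w @ i) ` Sn b (N - length i))" by simp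
    show "\<forall>i\<in>?F. \<forall>j\<in>?F. i \<noteq> j \<longrightarrow> (\<lambda>A. A @ w @ i) ` Sn b (N - length i) \<inter> (\<lambda>A. A @ w @ j) ` Sn b (N - length j) = {}"
    proof (intro ballI impI)
      fix Y2 Y2' assume Y2: "Y2 \<in> ?F" and Y2': "Y2' \<in> ?F" and ne: "Y2 \<noteq> Y2'"
      show "(\<lambda>A. A @ w @ Y2) ` Sn b (N - length Y2) \<inter> (\<lambda>A. A @ w @ Y2') ` Sn b (N - length Y2') = {}"
      proof (rule ccontr)
        assume "\<not> ?thesis"
        then obtain A A' where AA: "A \<in> Sn b (N - length Y2)" "A' \<in> Sn b (N - length Y2')"
          "A @ w @ Y2 = A' @ w @ Y2'" by auto
        have o1: "occ w ((A @ w) @ Y2) + 1 = occ w (A @ w) + occ w (w @ Y2)"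
          by (rule occ_after[OF wne endsw_app_w])
        have o2: "occ w ((A' @ w) @ Y2') + 1 = occ w (A' @ w) + occ w (w @ Y2')"
          by (rule occ_after[OF wne endsw_app_w])
        have "A @ w \<in> FP [] (occ w (A @ w @ Y2))" using o1 Y2 AA(1) ws
          by (auto simp: FP_def H_def Sn_def endsw_app_w)
        moreover have "A' @ w \<in> FP [] (occ w (A @ w @ Y2))" using o2 Y2' AA ws
          by (auto simp: FP_def H_def Sn_def endsw_app_w)
        ultimately have "A @ w = A' @ w" using fp_unique AA(3) by (metis append.assoc)
        then show False using AA(3) ne by simp
      qed
    qed
  qed
  also have "\<dots> = (\<Sum>Y2\<in>?F. b ^ (N - length Y2))"
    by (intro sum.cong refl) (simp add: card_image inj_on_def)
  finally show ?thesis using eq by simp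
qed

end


lemma infsum_trunc:
  fixes f :: "nat list \<Rightarrow> ennreal"
  assumes fin: "\<And>N. finite {Y\<in>A. length Y \<le> N}"
  shows "infsum f A = (SUP N. sum f {Y\<in>A. length Y \<le> N})"
proof (rule antisym)
  show "infsum f A \<le> (SUP N. sum f {Y\<in>A. length Y \<le> N})"
    unfolding ennreal_infsum_SUP
  proof (rule SUP_least)
    fix F assume F: "F \<in> {F. finite F \<and> F \<subseteq> A}"
    define N where "N = Max (length ` F)"
    have "F \<subseteq> {Y\<in>A. length Y \<le> N}" using F by (auto simp: N_def)
    then have "sum f F \<le> sum f {Y\<in>A. length Y \<le> N}" using fin by (intro sum_mono2) auto
    also have "\<dots> \<le> (SUP N. sum f {Y\<in>A. length Y \<le> N})" by (rule SUP_upper) simp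
    finally show "sum f F \<le> (SUP N. sum f {Y\<in>A. length Y \<le> N})" .
  qed
next
  show "(SUP N. sum f {Y\<in>A. length Y \<le> N}) \<le> infsum f A"
    using fin by (intro SUP_least ennreal_sum_le_infsum) auto
qed

lemma SUP_ennreal_lim:
  fixes x :: "nat \<Rightarrow> ennreal"
  assumes "incseq x" "\<And>N. x N = ennreal (r N)" "r \<longlonglongrightarrow> L"
  shows "(SUP N. x N) = ennreal L"
proof -
  have "x \<longlonglongrightarrow> (SUP N. x N)" by (rule LIMSEQ_SUP[OF assms(1)])
  moreover have "x \<longlonglongrightarrow> ennreal L" unfolding assms(2) by (intro tendsto_ennrealI assms(3))
  ultimately show ?thesis by (rule LIMSEQ_unique)
qed

lemma power_div_helper:
  fixes b :: real assumes "b > 0" "m \<le> N"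
  shows "b ^ (N - m) / b ^ N = 1 / b ^ m"
  using assms by (simp add: power_diff divide_simps)

lemma card_split_pred:
  assumes "finite A"
  shows "card {x\<in>A. P x} + card {x\<in>A. \<not> P x} = card A"
proof -
  have "card ({x\<in>A. P x} \<union> {x\<in>A. \<not> P x}) = card {x\<in>A. P x} + card {x\<in>A. \<not> P x}"
    by (rule card_Un_disjoint) (use assms in auto)
  moreover have "{x\<in>A. P x} \<union> {x\<in>A. \<not> P x} = A" by auto
  ultimately show ?thesis by simp
qed

context wsetup begin

definition om :: "nat list \<Rightarrow> ennreal" where
  "om X = ennreal (1 / real b ^ length X)"

lemma om_append: "om (X @ Y) = om X * om Y"
  unfolding om_def using bpos by (simp add: power_add ennreal_mult[symmetric])

lemma FP_sum_lim:
  assumes "occ w s < k"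
  shows "(\<lambda>N. \<Sum>Y1\<in>{Y1\<in>FP s k. length Y1 \<le> N}. 1 / real b ^ length Y1) \<longlonglongrightarrow> 1"
proof -
  define c where "c N = card {Y\<in>Sn b N. k \<le> occ w (s @ Y)}" for N
  define d where "d N = card {Y\<in>Sn b N. occ w (s @ Y) < k}" for N
  have cd: "c N + d N = b ^ N" for N
    using card_split_pred[OF finite_Sn[of b N], where P="\<lambda>Y. k \<le> occ w (s @ Y)"] unfolding c_def d_def
    by (simp add: not_le)
  have eqs: "(\<Sum>Y1\<in>{Y1\<in>FP s k. length Y1 \<le> N}. 1 / real b ^ length Y1) = 1 - real (d N) / real b ^ N" for N
  proof -
    have "(\<Sum>Y1\<in>{Y1\<in>FP s k. length Y1 \<le> N}. 1 / real b ^ length Y1) =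
          (\<Sum>Y1\<in>{Y1\<in>FP s k. length Y1 \<le> N}. real b ^ (N - length Y1) / real b ^ N)"
      using bpos by (intro sum.cong refl) (simp add: power_div_helper)
    also have "\<dots> = real (c N) / real b ^ N"
      unfolding c_def FP_card[OF assms] by (simp add: sum_divide_distrib)
    also have "\<dots> = 1 - real (d N) / real b ^ N"
    proof -
      have "real (c N + d N) = real (b ^ N)" using cd[of N] by simp
      then have "real (c N) = real b ^ N - real (d N)" by simp
      then show ?thesis using bpos by (simp add: divide_simps)
    qed
    finally show ?thesis .
  qed
  have dle: "real (d N) / real b ^ N \<le> rr (k - occ w s) N" for N
  proof -
    have "{Y\<in>Sn b N. occ w (s @ Y) < k} \<subseteq> {Y\<in>Sn b N. occ w Y < k - occ w s}"
    proof (intro subsetI CollectI conjI)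
      fix Y assume Y: "Y \<in> {Y\<in>Sn b N. occ w (s @ Y) < k}"
      then show "Y \<in> Sn b N" by simp
      have "occ w (s @ Y) < k" using Y by simp
      then show "occ w Y < k - occ w s" using occ_super[OF wne, of s Y] by linarith
    qed
    then have "d N \<le> bad (k - occ w s) N" unfolding d_def bad_def by (intro card_mono) auto
    then show ?thesis unfolding rr_def using bpos by (simp add: divide_right_mono)
  qed
  have "(\<lambda>N. real (d N) / real b ^ N) \<longlonglongrightarrow> 0"
    by (rule tendsto_sandwich[of "\<lambda>_. 0" _ _ "rr (k - occ w s)"])
       (use dle rr_lim in auto)
  then have "(\<lambda>N. 1 - real (d N) / real b ^ N) \<longlonglongrightarrow> 1 - 0" by (intro tendsto_diff) auto
  then show ?thesis unfolding eqs by simp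
qed

lemma H_sum:
  "(\<Sum>Y2\<in>{Y2\<in>H. length Y2 \<le> N}. 1 / real b ^ length Y2) = real b ^ length w * (1 - rr 1 (N + length w))"
proof -
  let ?p = "length w"
  have cd: "card {Z\<in>Sn b (N + ?p). 1 \<le> occ w Z} + bad 1 (N + ?p) = b ^ (N + ?p)"
    using card_split_pred[OF finite_Sn[of b "N + ?p"], where P="\<lambda>Y. 1 \<le> occ w Y"] unfolding bad_def
    by (simp add: not_le)
  have "(\<Sum>Y2\<in>{Y2\<in>H. length Y2 \<le> N}. 1 / real b ^ length Y2) =
        (\<Sum>Y2\<in>{Y2\<in>H. length Y2 \<le> N}. real b ^ (N - length Y2) / real b ^ N)"
    using bpos by (intro sum.cong refl) (simp add: power_div_helper)
  also have "\<dots> = real (card {Z\<in>Sn b (N + ?p). 1 \<le> occ w Z}) / real b ^ N"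
    unfolding H_card by (simp add: sum_divide_distrib)
  also have "\<dots> = real b ^ ?p * (1 - rr 1 (N + ?p))"
  proof -
    have "real (card {Z\<in>Sn b (N + ?p). 1 \<le> occ w Z}) = real b ^ (N + ?p) - real (bad 1 (N + ?p))"
    proof -
      have "real (card {Z\<in>Sn b (N + ?p). 1 \<le> occ w Z} + bad 1 (N + ?p)) = real (b ^ (N + ?p))"
        using cd by simp
      then show ?thesis by simp
    qed
    then show ?thesis using bpos by (simp add: rr_def power_add divide_simps)
  qed
  finally show ?thesis .
qed

lemma H_sum_lim:
  "(\<lambda>N. \<Sum>Y2\<in>{Y2\<in>H. length Y2 \<le> N}. 1 / real b ^ length Y2) \<longlonglongrightarrow> real b ^ length w"
proof -
  have "(\<lambda>N. rr 1 (N + length w)) \<longlonglongrightarrow> 0" using rr_lim[of 1] by (rule LIMSEQ_ignore_initial_segment)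
  then have "(\<lambda>N. real b ^ length w * (1 - rr 1 (N + length w))) \<longlonglongrightarrow> real b ^ length w * (1 - 0)"
    by (intro tendsto_intros)
  then show ?thesis unfolding H_sum by simp
qed

lemma om_sum: "finite F \<Longrightarrow> sum om F = ennreal (\<Sum>Y\<in>F. 1 / real b ^ length Y)"
  unfolding om_def by (subst sum_ennreal) auto

lemma W_trunc:
  assumes "A \<subseteq> {Y. set Y \<subseteq> {..<b}}"
    and that: "(\<lambda>N. \<Sum>Y\<in>{Y\<in>A. length Y \<le> N}. 1 / real b ^ length Y) \<longlonglongrightarrow> L"
  shows "infsum om A = ennreal L"
proof -
  have fin: "finite {Y\<in>A. length Y \<le> N}" for N
    by (rule finite_subset[OF _ finite_bounded_strings[of N]]) (use assms in auto)
  have "infsum om A = (SUP N. sum om {Y\<in>A. length Y \<le> N})" by (rule infsum_trunc[OF fin])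
  also have "\<dots> = ennreal L"
  proof (rule SUP_ennreal_lim[OF _ _ that])
    show "incseq (\<lambda>N. sum om {Y\<in>A. length Y \<le> N})"
      by (rule incseq_SucI, rule sum_mono2[OF fin]) auto
    show "sum om {Y\<in>A. length Y \<le> N} = ennreal (\<Sum>Y\<in>{Y\<in>A. length Y \<le> N}. 1 / real b ^ length Y)" for N
      by (rule om_sum[OF fin])
  qed
  finally show ?thesis .
qed

lemma W_FP: "occ w s < k \<Longrightarrow> infsum om (FP s k) = 1"
  using W_trunc[OF _ FP_sum_lim] by (auto simp: FP_def)

lemma W_H: "infsum om H = ennreal (real b ^ length w)"
  using W_trunc[OF _ H_sum_lim] by (auto simp: H_def)

lemma W_R:
  assumes "occ w s < k"
  shows "infsum om (R s k) = ennreal (real b ^ length w)"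
proof -
  have bij: "bij_betw (\<lambda>(Y1,Y2). Y1 @ Y2) (FP s k \<times> H) (R s k)" by (rule R_bij[OF assms])
  have "infsum om (R s k) = infsum om ((\<lambda>(Y1,Y2). Y1 @ Y2) ` (FP s k \<times> H))"
    using bij by (simp add: bij_betw_def)
  also have "\<dots> = infsum (om \<circ> (\<lambda>(Y1,Y2). Y1 @ Y2)) (FP s k \<times> H)"
    using bij by (intro infsum_reindex) (simp add: bij_betw_def)
  also have "\<dots> = infsum (\<lambda>(Y1,Y2). om Y1 * om Y2) (FP s k \<times> H)"
    by (intro infsum_cong) (auto simp: om_append)
  also have "\<dots> = infsum om (FP s k) * infsum om H" by (rule ennreal_infsum_product)
  finally show ?thesis using W_FP[OF assms] W_H by simp
qed

end


lemma str_val_snoc: "str_val b (X @ [d]) = str_val b X * b + d"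
  by (simp add: str_val_def)

lemma str_val_append: "str_val b (X @ Y) = str_val b X * b ^ length Y + str_val b Y"
proof (induction Y rule: rev_induct)
  case Nil
  then show ?case by (simp add: str_val_def)
next
  case (snoc d Y)
  then show ?case by (simp only: append_assoc[symmetric] str_val_snoc) (simp add: algebra_simps)
qed

lemma str_val_lt: assumes "set X \<subseteq> {..<b}" shows "str_val b X < b ^ length X"
  using assms
proof (induction X rule: rev_induct)
  case Nil
  then show ?case by (simp add: str_val_def)
next
  case (snoc d X)
  then have IH: "str_val b X + 1 \<le> b ^ length X" and d: "d < b" by auto
  have "str_val b (X @ [d]) = str_val b X * b + d" by (rule str_val_snoc)
  also have "\<dots> < str_val b X * b + b" using d by simp
  also have "\<dots> = (str_val b X + 1) * b" by simp
  also have "\<dots> \<le> b ^ length X * b" using IH by (rule mult_right_mono) simp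
  finally show ?case by (simp add: mult.commute)
qed

lemma str_val_inj: "inj_on (str_val b) (Sn b m)"
proof (induction m)
  case 0
  then show ?case by (simp add: Sn_def inj_on_def)
next
  case (Suc m)
  show ?case
  proof (rule inj_onI)
    fix X X' assume X: "X \<in> Sn b (Suc m)" and X': "X' \<in> Sn b (Suc m)" and eq: "str_val b X = str_val b X'"
    obtain X1 d where X1: "X = X1 @ [d]" using X by (cases X rule: rev_exhaust) (auto simp: Sn_def)
    obtain X1' d' where X1': "X' = X1' @ [d']" using X' by (cases X' rule: rev_exhaust) (auto simp: Sn_def)
    have dl: "d < b" "d' < b" using X X' X1 X1' by (auto simp: Sn_def)
    have e: "str_val b X1 * b + d = str_val b X1' * b + d'" using eq X1 X1' by (simp add: str_val_snoc)
    then have "(str_val b X1 * b + d) mod b = (str_val b X1' * b + d') mod b" by simp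
    then have dd: "d = d'" using dl by simp
    then have "str_val b X1 * b = str_val b X1' * b" using e by simp
    moreover have "b > 0" using dl by simp
    ultimately have "str_val b X1 = str_val b X1'" by simp
    moreover have "X1 \<in> Sn b m" "X1' \<in> Sn b m" using X X' X1 X1' by (auto simp: Sn_def)
    ultimately have "X1 = X1'" using Suc.IH by (auto dest: inj_onD)
    then show "X = X'" using X1 X1' dd by simp
  qed
qed

lemma str_val_image: "str_val b ` Sn b m = {..<b ^ m}"
proof (rule card_subset_eq)
  show "str_val b ` Sn b m \<subseteq> {..<b ^ m}" using str_val_lt by (auto simp: Sn_def)
  show "card (str_val b ` Sn b m) = card {..<b ^ m}"
    using card_image[OF str_val_inj[of b m]] by simp
qed simp

lemma str_val_bij: "bij_betw (str_val b) (Sn b m) {..<b ^ m}"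
  using str_val_inj str_val_image by (auto simp: bij_betw_def)

lemma str_x_cell:
  assumes "b > 0" "length u = m" "set Y \<subseteq> {..<b}"
  shows "real (str_val b u) / real b ^ m \<le> str_x b (u @ Y)"
    "str_x b (u @ Y) < (real (str_val b u) + 1) / real b ^ m"
proof -
  let ?n = "length Y"
  have lt: "str_val b Y < b ^ ?n" by (rule str_val_lt[OF assms(3)])
  have x: "str_x b (u @ Y) = (real (str_val b u) * real b ^ ?n + real (str_val b Y)) / (real b ^ m * real b ^ ?n)"
    unfolding str_x_def str_val_append using assms(2) by (simp add: power_add)
  have bp: "real b ^ ?n > 0" "real b ^ m > 0" using assms(1) by auto
  show "real (str_val b u) / real b ^ m \<le> str_x b (u @ Y)"
    unfolding x using bp by (simp add: divide_simps)
  have "real (str_val b Y) < real b ^ ?n" using lt by (metis of_nat_less_iff of_nat_power)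
  then show "str_x b (u @ Y) < (real (str_val b u) + 1) / real b ^ m"
    unfolding x using bp by (simp add: divide_simps algebra_simps)
qed

definition cellB :: "nat \<Rightarrow> nat \<Rightarrow> real set" where
  "cellB B j = {real j / real B ..< (real j + 1) / real B}"

lemma interval_open_sub:
  fixes I :: "real set"
  assumes "is_interval I" "I \<noteq> {}" "bdd_below I" "bdd_above I" "Inf I < x" "x < Sup I"
  shows "x \<in> I"
proof -
  obtain y where y: "y \<in> I" "y < x" using assms cInf_less_iff by blast
  obtain z where z: "z \<in> I" "x < z" using assms less_cSup_iff by blast
  show ?thesis using assms(1) y z unfolding is_interval_1 by (meson less_imp_le)
qed

lemma count_inside:
  fixes I :: "real set"
  assumes "is_interval I" "I \<noteq> {}" "I \<subseteq> {0..<1}" "B > 0"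
  shows "real B * (Sup I - Inf I) - 2 \<le> real (card {j\<in>{..<B}. cellB B j \<subseteq> I})"
proof -
  have bb: "bdd_below I" "bdd_above I"
    by (rule bdd_belowI[of _ 0], use assms(3) in force) (rule bdd_aboveI[of _ 1], use assms(3) in force)
  obtain x0 where x0: "x0 \<in> I" using assms(2) by blast
  have a0: "0 \<le> Inf I" using assms(2,3) by (intro cInf_greatest) auto
  have c1: "Sup I \<le> 1" using assms(2,3) by (intro cSup_least) auto
  define a c where "a = Inf I" and "c = Sup I"
  have Bp: "real B > 0" using assms(4) by simp
  define lo hi where "lo = nat (\<lfloor>a * B\<rfloor> + 1)" and "hi = nat \<lfloor>c * B\<rfloor>"
  have sub: "{lo..<hi} \<subseteq> {j\<in>{..<B}. cellB B j \<subseteq> I}"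
  proof
    fix j assume j: "j \<in> {lo..<hi}"
    have aB: "a * B \<ge> 0" using a0 a_def Bp by simp
    have "0 \<le> x0" using x0 assms(3) by auto
    moreover have "x0 \<le> c" unfolding c_def using x0 bb(2) by (rule cSup_upper)
    ultimately have cB: "c * B \<ge> 0" using Bp by simp
    have jlo: "real j > a * B"
    proof -
      have "int j \<ge> \<lfloor>a * B\<rfloor> + 1" using j aB unfolding lo_def by auto
      then show ?thesis by linarith
    qed
    have jhi: "real j + 1 \<le> c * B"
    proof -
      have "int j + 1 \<le> \<lfloor>c * B\<rfloor>" using j cB unfolding hi_def by auto
      then show ?thesis by linarith
    qed
    have "c * real B \<le> 1 * real B" using c1 c_def Bp by (intro mult_right_mono) auto
    then have "real j + 1 \<le> real B" using jhi by simp
    then have jB: "j < B" by linarith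
    have "cellB B j \<subseteq> I"
    proof
      fix x assume "x \<in> cellB B j"
      then have x: "real j / B \<le> x" "x < (real j + 1) / B" by (auto simp: cellB_def)
      have "real j \<le> x * B" using x(1) Bp by (simp add: field_simps)
      then have "a * B < x * B" using jlo by linarith
      then have "a < x" using Bp by simp
      moreover have "x * B < real j + 1" using x(2) Bp by (simp add: field_simps)
      then have "x * B < c * B" using jhi by linarith
      then have "x < c" using Bp by simp
      moreover note \<open>a < x\<close>
      ultimately show "x \<in> I" using interval_open_sub[OF assms(1,2) bb] a_def c_def by blast
    qed
    then show "j \<in> {j\<in>{..<B}. cellB B j \<subseteq> I}" using jB by simp
  qed
  have "real (card {lo..<hi}) \<le> real (card {j\<in>{..<B}. cellB B j \<subseteq> I})"
    using card_mono[OF _ sub] by simp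
  moreover have "real (card {lo..<hi}) \<ge> real B * (c - a) - 2"
  proof -
    have aB: "a * B \<ge> 0" using a0 a_def Bp by simp
    have "real (card {lo..<hi}) = real (hi - lo)" by simp
    also have "\<dots> \<ge> real hi - real lo" by linarith
    finally have "real (card {lo..<hi}) \<ge> real hi - real lo" .
    moreover have "real hi \<ge> c * B - 1" unfolding hi_def by linarith
    moreover have "real lo \<le> a * B + 1" unfolding lo_def using aB by linarith
    ultimately show ?thesis by (simp add: algebra_simps)
  qed
  ultimately show ?thesis unfolding a_def[symmetric] c_def[symmetric] by linarith
qed

lemma count_touch:
  fixes I :: "real set"
  assumes "is_interval I" "I \<noteq> {}" "I \<subseteq> {0..<1}" "B > 0"
  shows "real (card {j\<in>{..<B}. cellB B j \<inter> I \<noteq> {}}) \<le> real B * (Sup I - Inf I) + 2"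
proof -
  have bb: "bdd_below I" "bdd_above I"
    by (rule bdd_belowI[of _ 0], use assms(3) in force) (rule bdd_aboveI[of _ 1], use assms(3) in force)
  have a0: "0 \<le> Inf I" using assms(2,3) by (intro cInf_greatest) auto
  define a c where "a = Inf I" and "c = Sup I"
  have Bp: "real B > 0" using assms(4) by simp
  define lo hi where "lo = nat \<lfloor>a * B\<rfloor>" and "hi = nat \<lfloor>c * B\<rfloor>"
  have sub: "{j\<in>{..<B}. cellB B j \<inter> I \<noteq> {}} \<subseteq> {lo..hi}"
  proof
    fix j assume "j \<in> {j\<in>{..<B}. cellB B j \<inter> I \<noteq> {}}"
    then obtain x where x: "x \<in> I" "real j / B \<le> x" "x < (real j + 1) / B" by (auto simp: cellB_def)
    have "a \<le> x" "x \<le> c" using x bb by (auto simp: a_def c_def intro: cInf_lower cSup_upper)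
    moreover have "real j \<le> x * B" "x * B < real j + 1" using x Bp by (auto simp: field_simps)
    moreover have "x * B \<le> c * B" "a * B \<le> x * B" using \<open>a \<le> x\<close> \<open>x \<le> c\<close> Bp
      by (auto intro: mult_right_mono)
    ultimately have "real j \<le> c * B" "a * B < real j + 1" by linarith+
    then have "int j \<le> \<lfloor>c * B\<rfloor>" "\<lfloor>a * B\<rfloor> \<le> int j" by linarith+
    then show "j \<in> {lo..hi}" unfolding lo_def hi_def by auto
  qed
  have "real (card {j\<in>{..<B}. cellB B j \<inter> I \<noteq> {}}) \<le> real (card {lo..hi})"
    using card_mono[OF _ sub] by simp
  also have "\<dots> = real (Suc hi - lo)" by simp
  also have "\<dots> \<le> real B * (c - a) + 2"
  proof -
    have aB: "a * B \<ge> 0" using a0 a_def Bp by simp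
    have "real (Suc hi - lo) \<le> real hi + 1 - real lo \<or> Suc hi \<le> lo" by linarith
    moreover have "real hi \<le> c * B"
    proof -
      obtain x0 where x0: "x0 \<in> I" using assms(2) by blast
      have "0 \<le> x0" using x0 assms(3) by auto
      moreover have "x0 \<le> c" unfolding c_def using x0 bb(2) by (rule cSup_upper)
      ultimately have cB: "c * B \<ge> 0" using Bp by simp
      then show ?thesis unfolding hi_def by linarith
    qed
    moreover have "real lo \<ge> a * B - 1" unfolding lo_def using aB by linarith
    moreover have "c * B \<ge> a * B" using a_def c_def bb assms(2) Bp by (simp add: cInf_le_cSup)
    ultimately show ?thesis by (auto simp: algebra_simps)
  qed
  finally show ?thesis unfolding a_def[symmetric] c_def[symmetric] .
qed



context wsetup begin

definition QQ :: "nat \<Rightarrow> real set \<Rightarrow> nat list \<Rightarrow> nat list set" where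
  "QQ k I u = {Y. set Y \<subseteq> {..<b} \<and> occ w (u @ Y) = k \<and> str_x b (u @ Y) \<in> I}"

lemma mu_eq_om: "mu b w k I = infsum om {X. set X \<subseteq> {..<b} \<and> occ w X = k \<and> str_x b X \<in> I}"
  unfolding mu_def om_def is_string_iff ..

lemma mu_decomp:
  assumes "m < k"
  shows "mu b w k I = (\<Sum>u\<in>Sn b m. om u * infsum om (QQ k I u))"
proof -
  let ?f = "\<lambda>(u, Y). u @ Y"
  have eq: "{X. set X \<subseteq> {..<b} \<and> occ w X = k \<and> str_x b X \<in> I} = ?f ` Sigma (Sn b m) (QQ k I)"
  proof (intro set_eqI iffI)
    fix X assume X: "X \<in> {X. set X \<subseteq> {..<b} \<and> occ w X = k \<and> str_x b X \<in> I}"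
    have "m < length X" using occ_le_length[OF wne, of X] X assms by simp
    then have "take m X \<in> Sn b m" "drop m X \<in> QQ k I (take m X)" using X
      by (auto simp: Sn_def QQ_def dest: in_set_takeD in_set_dropD)
    then show "X \<in> ?f ` Sigma (Sn b m) (QQ k I)"
      by (auto intro!: image_eqI[of _ _ "(take m X, drop m X)"])
  next
    fix X assume "X \<in> ?f ` Sigma (Sn b m) (QQ k I)"
    then show "X \<in> {X. set X \<subseteq> {..<b} \<and> occ w X = k \<and> str_x b X \<in> I}"
      by (auto simp: Sn_def QQ_def)
  qed
  have inj: "inj_on ?f (Sigma (Sn b m) (QQ k I))"
  proof (rule inj_onI)
    fix x y assume x: "x \<in> Sigma (Sn b m) (QQ k I)" and y: "y \<in> Sigma (Sn b m) (QQ k I)" and e: "?f x = ?f y"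
    obtain u Y where xu: "x = (u, Y)" "length u = m" using x by (cases x) (auto simp: Sn_def)
    obtain u' Y' where yu: "y = (u', Y')" "length u' = m" using y by (cases y) (auto simp: Sn_def)
    have "u @ Y = u' @ Y'" using e xu yu by simp
    then have "u = u' \<and> Y = Y'" using xu yu by (simp add: append_eq_append_conv)
    then show "x = y" using xu yu by simp
  qed
  have "mu b w k I = infsum om (?f ` Sigma (Sn b m) (QQ k I))" unfolding mu_eq_om eq ..
  also have "\<dots> = infsum (om \<circ> ?f) (Sigma (Sn b m) (QQ k I))" by (rule infsum_reindex[OF inj])
  also have "\<dots> = infsum (\<lambda>(u, Y). om u * om Y) (Sigma (Sn b m) (QQ k I))"
    by (intro infsum_cong) (auto simp: om_append)
  also have "\<dots> = infsum (\<lambda>u. infsum (\<lambda>Y. om u * om Y) (QQ k I u)) (Sn b m)"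
    using ennreal_infsum_Sigma[of "\<lambda>(u, Y). om u * om Y" "Sn b m" "QQ k I"] by simp
  also have "\<dots> = infsum (\<lambda>u. om u * infsum om (QQ k I u)) (Sn b m)"
    by (simp add: ennreal_infsum_cmult)
  also have "\<dots> = (\<Sum>u\<in>Sn b m. om u * infsum om (QQ k I u))" by simp
  finally show ?thesis .
qed

lemma om_Sn: "u \<in> Sn b m \<Longrightarrow> om u = ennreal (1 / real b ^ m)"
  by (simp add: om_def Sn_def)

lemma QQ_sub: "QQ k I u \<subseteq> R u k"
  by (auto simp: QQ_def R_def)

lemma QQ_full:
  assumes "u \<in> Sn b m" "cellB (b ^ m) (str_val b u) \<subseteq> I"
  shows "QQ k I u = R u k"
proof -
  have "str_x b (u @ Y) \<in> I" if "set Y \<subseteq> {..<b}" for Y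
  proof -
    have "str_x b (u @ Y) \<in> cellB (b ^ m) (str_val b u)"
      using str_x_cell[of b u m Y] that assms(1) b2 by (auto simp: cellB_def Sn_def)
    then show ?thesis using assms(2) by blast
  qed
  then show ?thesis by (auto simp: QQ_def R_def)
qed

lemma QQ_empty:
  assumes "u \<in> Sn b m" "cellB (b ^ m) (str_val b u) \<inter> I = {}"
  shows "QQ k I u = {}"
proof -
  have "str_x b (u @ Y) \<notin> I" if "set Y \<subseteq> {..<b}" for Y
  proof -
    have "str_x b (u @ Y) \<in> cellB (b ^ m) (str_val b u)"
      using str_x_cell[of b u m Y] that assms(1) b2 by (auto simp: cellB_def Sn_def)
    then show ?thesis using assms(2) by blast
  qed
  then show ?thesis by (auto simp: QQ_def)
qed

lemma sum_Sn_reindex: "(\<Sum>u\<in>Sn b m. g (str_val b u)) = (\<Sum>j\<in>{..<b ^ m}. g j)"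
  using sum.reindex_bij_betw[OF str_val_bij, of g b m] by simp

lemma mu_upper:
  assumes "m < k"
  shows "mu b w k I \<le> of_nat (card {j\<in>{..<b ^ m}. cellB (b ^ m) j \<inter> I \<noteq> {}}) * ennreal (real b ^ length w / real b ^ m)"
proof -
  let ?T = "{j\<in>{..<b ^ m}. cellB (b ^ m) j \<inter> I \<noteq> {}}"
  let ?c = "ennreal (real b ^ length w / real b ^ m)"
  have "mu b w k I = (\<Sum>u\<in>Sn b m. om u * infsum om (QQ k I u))" by (rule mu_decomp[OF assms])
  also have "\<dots> \<le> (\<Sum>u\<in>Sn b m. (\<lambda>j. if j \<in> ?T then ?c else 0) (str_val b u))"
  proof (rule sum_mono)
    fix u assume u: "u \<in> Sn b m"
    have ou: "occ w u < k" using occ_le_length[OF wne, of u] u assms by (simp add: Sn_def)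
    have vl: "str_val b u < b ^ m" using str_val_lt[of u b] u by (simp add: Sn_def)
    show "om u * infsum om (QQ k I u) \<le> (\<lambda>j. if j \<in> ?T then ?c else 0) (str_val b u)"
    proof (cases "str_val b u \<in> ?T")
      case True
      have "infsum om (QQ k I u) \<le> infsum om (R u k)" by (rule ennreal_infsum_mono_set[OF QQ_sub])
      also have "\<dots> = ennreal (real b ^ length w)" by (rule W_R[OF ou])
      finally have "om u * infsum om (QQ k I u) \<le> ennreal (1 / real b ^ m) * ennreal (real b ^ length w)"
        using om_Sn[OF u] by (simp add: mult_left_mono)
      also have "\<dots> = ?c" using bpos by (simp add: ennreal_mult[symmetric])
      finally show ?thesis using True by simp
    next
      case False
      then have "QQ k I u = {}" using QQ_empty[OF u] vl by auto
      then show ?thesis using False by simp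
    qed
  qed
  also have "\<dots> = (\<Sum>j\<in>{..<b ^ m}. if j \<in> ?T then ?c else 0)" by (rule sum_Sn_reindex)
  also have "\<dots> = (\<Sum>j\<in>?T. ?c)" by (simp add: sum.inter_filter[symmetric] Int_def)
  also have "\<dots> = of_nat (card ?T) * ?c" by simp
  finally show ?thesis .
qed

lemma mu_lower:
  assumes "m < k"
  shows "of_nat (card {j\<in>{..<b ^ m}. cellB (b ^ m) j \<subseteq> I}) * ennreal (real b ^ length w / real b ^ m) \<le> mu b w k I"
proof -
  let ?G = "{j\<in>{..<b ^ m}. cellB (b ^ m) j \<subseteq> I}"
  let ?c = "ennreal (real b ^ length w / real b ^ m)"
  have "of_nat (card ?G) * ?c = (\<Sum>j\<in>?G. ?c)" by simp
  also have "\<dots> = (\<Sum>j\<in>{..<b ^ m}. if j \<in> ?G then ?c else 0)" by (simp add: sum.inter_filter[symmetric] Int_def)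
  also have "\<dots> = (\<Sum>u\<in>Sn b m. (\<lambda>j. if j \<in> ?G then ?c else 0) (str_val b u))" by (rule sum_Sn_reindex[symmetric])
  also have "\<dots> \<le> (\<Sum>u\<in>Sn b m. om u * infsum om (QQ k I u))"
  proof (rule sum_mono)
    fix u assume u: "u \<in> Sn b m"
    have ou: "occ w u < k" using occ_le_length[OF wne, of u] u assms by (simp add: Sn_def)
    show "(\<lambda>j. if j \<in> ?G then ?c else 0) (str_val b u) \<le> om u * infsum om (QQ k I u)"
    proof (cases "str_val b u \<in> ?G")
      case True
      then have "QQ k I u = R u k" using QQ_full[OF u] by auto
      then have "om u * infsum om (QQ k I u) = ennreal (1 / real b ^ m) * ennreal (real b ^ length w)"
        using om_Sn[OF u] W_R[OF ou] by simp
      also have "\<dots> = ?c" using bpos by (simp add: ennreal_mult[symmetric])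
      finally show ?thesis using True by simp
    next
      case False
      then have "(\<lambda>j. if j \<in> ?G then ?c else 0) (str_val b u) = 0" by (simp only: if_False)
      then show ?thesis by simp
    qed
  qed
  also have "\<dots> = mu b w k I" by (rule mu_decomp[OF assms, symmetric])
  finally show ?thesis .
qed

end


lemma of_nat_mult_ennreal: "0 \<le> x \<Longrightarrow> of_nat n * ennreal x = ennreal (real n * x)"
  by (simp add: ennreal_of_nat_eq_real_of_nat ennreal_mult)

theorem theorem2:
  fixes b p :: nat and w :: "nat list" and I :: "real set"
  assumes "b \<ge> 2" and "p \<ge> 1" and "length w = p" and "is_string b w"
    and "is_interval I" and "I \<noteq> {}" and "I \<subseteq> {0..<1}"
  shows "(\<lambda>k. mu b w k I) \<longlonglongrightarrow> ennreal (real b ^ p * (Sup I - Inf I))"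
proof -
  interpret wsetup b w
    using assms(1-4) by unfold_locales (auto simp: is_string_iff)
  define L where "L = real b ^ p * (Sup I - Inf I)"
  have bp: "real b ^ p > 0" using bpos by simp
  have key: "\<bar>enn2real (mu b w k I) - L\<bar> \<le> 2 * real b ^ p / real b ^ m \<and>
             mu b w k I = ennreal (enn2real (mu b w k I))" if mk: "m < k" for m k
  proof -
    define cT where "cT = card {j\<in>{..<b ^ m}. cellB (b ^ m) j \<inter> I \<noteq> {}}"
    define cG where "cG = card {j\<in>{..<b ^ m}. cellB (b ^ m) j \<subseteq> I}"
    define q where "q = real b ^ p / real b ^ m"
    have q0: "q \<ge> 0" unfolding q_def using bpos by simp
    have up: "mu b w k I \<le> ennreal (real cT * q)"
      using mu_upper[OF mk, of I] of_nat_mult_ennreal[OF q0] assms(3) unfolding cT_def q_def by simp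
    have lo: "ennreal (real cG * q) \<le> mu b w k I"
      using mu_lower[OF mk, of I] of_nat_mult_ennreal[OF q0] assms(3) unfolding cG_def q_def by simp
    have fin: "mu b w k I < top" using up ennreal_less_top[of "real cT * q"] by (rule le_less_trans)
    have e: "mu b w k I = ennreal (enn2real (mu b w k I))" using fin by simp
    have "ennreal (enn2real (mu b w k I)) \<le> ennreal (real cT * q)" using up e by simp
    then have r1: "enn2real (mu b w k I) \<le> real cT * q"
      using ennreal_le_iff[of "real cT * q" "enn2real (mu b w k I)"] q0 by simp
    have "ennreal (real cG * q) \<le> ennreal (enn2real (mu b w k I))" using lo e by simp
    then have r2: "real cG * q \<le> enn2real (mu b w k I)"
      using ennreal_le_iff[of "enn2real (mu b w k I)" "real cG * q"] enn2real_nonneg by simp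
    have Bm: "(0::nat) < b ^ m" using b2 by simp
    have cTb: "real cT \<le> real (b ^ m) * (Sup I - Inf I) + 2"
      unfolding cT_def by (rule count_touch[OF assms(5,6,7) Bm])
    have cGb: "real (b ^ m) * (Sup I - Inf I) - 2 \<le> real cG"
      unfolding cG_def by (rule count_inside[OF assms(5,6,7) Bm])
    have bm: "real b ^ m > 0" using bpos by simp
    have eq1: "(real (b ^ m) * (Sup I - Inf I) + 2) * q = L + 2 * real b ^ p / real b ^ m"
      unfolding q_def L_def using bm by (simp add: field_simps)
    have eq2: "(real (b ^ m) * (Sup I - Inf I) - 2) * q = L - 2 * real b ^ p / real b ^ m"
      unfolding q_def L_def using bm by (simp add: field_simps)
    have "real cT * q \<le> (real (b ^ m) * (Sup I - Inf I) + 2) * q" by (rule mult_right_mono[OF cTb q0])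
    moreover have "(real (b ^ m) * (Sup I - Inf I) - 2) * q \<le> real cG * q" by (rule mult_right_mono[OF cGb q0])
    ultimately have "\<bar>enn2real (mu b w k I) - L\<bar> \<le> 2 * real b ^ p / real b ^ m"
      using r1 r2 eq1 eq2 by linarith
    then show ?thesis using e by simp
  qed
  have lim: "(\<lambda>k. enn2real (mu b w k I)) \<longlonglongrightarrow> L"
  proof (rule LIMSEQ_I)
    fix r :: real assume r: "r > 0"
    have "1 < real b" using b2 by simp
    then obtain m where m: "2 * real b ^ p / r < real b ^ m" using real_arch_pow by blast
    have bm: "real b ^ m > 0" using bpos by simp
    have mr: "2 * real b ^ p / real b ^ m < r" using m r bm by (simp add: field_simps)
    have "\<forall>k\<ge>Suc m. norm (enn2real (mu b w k I) - L) < r"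
    proof (intro allI impI)
      fix k assume "Suc m \<le> k"
      then have "m < k" by simp
      then show "norm (enn2real (mu b w k I) - L) < r" using key[of m k] mr by simp
    qed
    then show "\<exists>N. \<forall>k\<ge>N. norm (enn2real (mu b w k I) - L) < r" by blast
  qed
  then have "(\<lambda>k. ennreal (enn2real (mu b w k I))) \<longlonglongrightarrow> ennreal L" by (rule tendsto_ennrealI)
  moreover have "eventually (\<lambda>k. ennreal (enn2real (mu b w k I)) = mu b w k I) sequentially"
    unfolding eventually_sequentially
  proof (intro exI[of _ 1] allI impI)
    fix k :: nat assume "1 \<le> k"
    then have "0 < k" by simp
    then show "ennreal (enn2real (mu b w k I)) = mu b w k I" using key[of 0 k] by simp
  qed
  ultimately show ?thesis unfolding L_def[symmetric] by (rule Lim_transform_eventually)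
qed


end
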